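(* Fix the time-space domain, i.e. fix $T>0$ and $X>0$. If $\|e(u_t)\|_\infty=O(\Delta t)$, then $\|e(u)\|_{2,\Delta}\to 0$ as $\Delta t,\Delta x\to 0$.
   Context: The time-space domain is $[0,T]\times[0,X]^d$, sampled on a regular grid with time levels $t^n=n\Delta t$, $n=0,\dots,N$, $\Delta t=T/N$, and $M$ points per spatial dimension with spacing $\Delta x=X/(M-1)$. $u$ is the exact (smooth) solution of the true PDE and $u_t$ its exact time derivative at the grid points. $\widehat{U}$ is the numerical solution on the same grid of the identified PDE, and $D_t\widehat{U}$ its numerical time derivative computed by forward differences $(\widehat{U}^{n+1}-\widehat{U}^n)/\Delta t$. The errors are $e(u)=\widehat{U}-u$ and $e(u_t)=D_t\widehat{U}-u_t$, vectorized over all grid points; $\|\cdot\|_\infty$ is the max-norm and $\|v\|_{2,\Delta}=\sqrt{\Delta x^d\,\Delta t}\,\|v\|_2$ is the grid-dependent $L_2$ norm. *)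

theory Defs
  imports "HOL-Analysis.Analysis"
begin

text \<open>Grid on [0,T] x [0,X]^d, d = CARD('d). N time steps, M points per spatial dimension.\<close>

definition dt :: "real \<Rightarrow> nat \<Rightarrow> real" where
  "dt T N = T / real N"

definition dx :: "real \<Rightarrow> nat \<Rightarrow> real" where
  "dx X M = X / (real M - 1)"

definition grid_idx :: "nat \<Rightarrow> ('d::finite \<Rightarrow> nat) set" where
  "grid_idx M = {j. \<forall>i. j i < M}"

definition gpt :: "real \<Rightarrow> nat \<Rightarrow> ('d::finite \<Rightarrow> nat) \<Rightarrow> real ^ 'd" where
  "gpt X M j = (\<chi> i. real (j i) * dx X M)"

definition cube :: "real \<Rightarrow> (real ^ 'd::finite) set" where
  "cube X = {x. \<forall>i. 0 \<le> x $ i \<and> x $ i \<le> X}"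

text \<open>Forward difference in time of the numerical solution U (U n j = value at t^n, spatial index j).\<close>
definition Dt_hat :: "real \<Rightarrow> nat \<Rightarrow> (nat \<Rightarrow> ('d::finite \<Rightarrow> nat) \<Rightarrow> real) \<Rightarrow> nat \<Rightarrow> ('d \<Rightarrow> nat) \<Rightarrow> real" where
  "Dt_hat T N U n j = (U (Suc n) j - U n j) / dt T N"

text \<open>Max-norm of e(u_t) = D_t U - u_t over all grid points where the forward difference is defined (n < N).\<close>
definition err_ut_inf :: "real \<Rightarrow> real \<Rightarrow> nat \<Rightarrow> nat \<Rightarrow> (real \<Rightarrow> real ^ 'd::finite \<Rightarrow> real)
    \<Rightarrow> (nat \<Rightarrow> ('d \<Rightarrow> nat) \<Rightarrow> real) \<Rightarrow> real" where
  "err_ut_inf T X N M ut U =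
     Max {\<bar>Dt_hat T N U n j - ut (real n * dt T N) (gpt X M j)\<bar> | n j. n < N \<and> j \<in> grid_idx M}"

text \<open>Grid-dependent L2 norm of e(u) = U - u over all grid points (n = 0..N).\<close>
definition err_u_L2 :: "real \<Rightarrow> real \<Rightarrow> nat \<Rightarrow> nat \<Rightarrow> (real \<Rightarrow> real ^ 'd::finite \<Rightarrow> real)
    \<Rightarrow> (nat \<Rightarrow> ('d \<Rightarrow> nat) \<Rightarrow> real) \<Rightarrow> real" where
  "err_u_L2 T X N M u U =
     sqrt (dx X M ^ CARD('d) * dt T N) *
     sqrt (\<Sum>n\<le>N. \<Sum>j\<in>grid_idx M. (U n j - u (real n * dt T N) (gpt X M j))\<^sup>2)"

end

theory Submission imports Defs begin

lemma lip_bound: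
  fixes f f' :: "real \<Rightarrow> real"
  assumes "\<And>s. s \<in> {a..b} \<Longrightarrow> (f has_real_derivative f' s) (at s within {a..b})"
    and "\<And>s. s \<in> {a..b} \<Longrightarrow> \<bar>f' s\<bar> \<le> B" and "a \<le> b"
  shows "\<bar>f b - f a\<bar> \<le> B * (b - a)"
  using field_differentiable_bound[of "{a..b}" f f' B b a] assms by auto

lemma taylor1:
  fixes u ut :: "real \<Rightarrow> real"
  assumes du: "\<And>s. s \<in> {0..T} \<Longrightarrow> (u has_real_derivative ut s) (at s within {0..T})"
    and dut: "\<And>s. s \<in> {0..T} \<Longrightarrow> (ut has_real_derivative utt s) (at s within {0..T})"
    and K: "\<And>s. s \<in> {0..T} \<Longrightarrow> \<bar>utt s\<bar> \<le> K"
    and t: "0 \<le> t" "t + h \<le> T" "0 \<le> h"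
  shows "\<bar>u (t + h) - u t - h * ut t\<bar> \<le> K * h\<^sup>2"
proof -
  have sub: "{t..t+h} \<subseteq> {0..T}" using t by auto
  have lipu: "\<bar>ut s - ut t\<bar> \<le> K * h" if "s \<in> {t..t+h}" for s
  proof -
    have "\<bar>ut s - ut t\<bar> \<le> K * (s - t)"
      apply (rule lip_bound)
      using that sub by (auto intro!: DERIV_subset[OF dut] K)
    also have "\<dots> \<le> K * h"
    proof -
      have "K \<ge> 0" using K[of 0] t by auto
      then show ?thesis using that by (auto intro!: mult_left_mono)
    qed
    finally show ?thesis .
  qed
  have "\<bar>(u (t+h) - (t+h) * ut t) - (u t - t * ut t)\<bar> \<le> (K * h) * (t + h - t)"
    apply (rule lip_bound[where f' = "\<lambda>s. ut s - ut t"])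
    using sub lipu t
    by (auto intro!: derivative_eq_intros DERIV_subset[OF du])
  then show ?thesis by (simp add: algebra_simps power2_eq_square)
qed

lemma grid_eq: "grid_idx M = PiE UNIV (\<lambda>_. {..<M})"
  by (auto simp: grid_idx_def PiE_def Pi_def)

lemma grid_fin: "finite (grid_idx M :: ('d::finite \<Rightarrow> nat) set)"
  unfolding grid_eq by (rule finite_PiE) auto

lemma grid_card: "card (grid_idx M :: ('d::finite \<Rightarrow> nat) set) = M ^ CARD('d)"
  unfolding grid_eq by (simp add: card_PiE)

lemma cube_eq: "cube X = cbox (vec 0) (vec X :: real ^ 'd::finite)"
  by (auto simp: cube_def mem_box_cart)

lemma gpt_cube: assumes "M \<ge> 2" "X > 0" "j \<in> grid_idx M" shows "gpt X M j \<in> cube X"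
proof -
  have "real (j i) * (X / (real M - 1)) \<le> X" for i
  proof -
    have "j i < M" using assms by (auto simp: grid_idx_def)
    hence "real (j i) \<le> real M - 1" using assms by linarith
    hence "real (j i) * (X / (real M - 1)) \<le> (real M - 1) * (X / (real M - 1))"
      using assms by (intro mult_right_mono) auto
    also have "\<dots> = X" using assms by simp
    finally show ?thesis .
  qed
  then show ?thesis using assms by (auto simp: cube_def gpt_def dx_def)
qed

theorem corollary1:
  fixes T X :: real
    and u ut utt :: "real \<Rightarrow> real ^ 'd::finite \<Rightarrow> real"
    and Uhat :: "nat \<Rightarrow> nat \<Rightarrow> nat \<Rightarrow> ('d \<Rightarrow> nat) \<Rightarrow> real"
  assumes T_pos: "T > 0" and X_pos: "X > 0"
    and u_t: "\<And>t x. t \<in> {0..T} \<Longrightarrow> x \<in> cube X \<Longrightarrow>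
               ((\<lambda>s. u s x) has_real_derivative ut t x) (at t within {0..T})"
    and u_tt: "\<And>t x. t \<in> {0..T} \<Longrightarrow> x \<in> cube X \<Longrightarrow>
               ((\<lambda>s. ut s x) has_real_derivative utt t x) (at t within {0..T})"
    and utt_cont: "continuous_on ({0..T} \<times> cube X) (\<lambda>p. utt (fst p) (snd p))"
    and init: "\<And>N M j. j \<in> grid_idx M \<Longrightarrow> Uhat N M 0 j = u 0 (gpt X M j)"
    and err_ut_O: "\<exists>C \<delta>. \<delta> > 0 \<and> (\<forall>N M. N \<ge> 1 \<longrightarrow> M \<ge> 2 \<longrightarrow> dt T N < \<delta> \<longrightarrow> dx X M < \<delta> \<longrightarrow>
                     err_ut_inf T X N M ut (Uhat N M) \<le> C * dt T N)"
  shows "\<forall>\<epsilon>>0. \<exists>\<delta>>0. \<forall>N M. N \<ge> 1 \<longrightarrow> M \<ge> 2 \<longrightarrow> dt T N < \<delta> \<longrightarrow> dx X M < \<delta> \<longrightarrow>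
           err_u_L2 T X N M u (Uhat N M) < \<epsilon>"
proof (intro allI impI)
  fix \<epsilon> :: real assume eps: "\<epsilon> > 0"
  obtain C \<delta>0 where d0: "\<delta>0 > 0" and Cb: "\<And>N M. N \<ge> 1 \<Longrightarrow> M \<ge> 2 \<Longrightarrow> dt T N < \<delta>0 \<Longrightarrow> dx X M < \<delta>0 \<Longrightarrow>
                     err_ut_inf T X N M ut (Uhat N M) \<le> C * dt T N"
    using err_ut_O by blast
  have "compact ((\<lambda>p. utt (fst p) (snd p)) ` ({0..T} \<times> cube X))"
    by (intro compact_continuous_image utt_cont compact_Times) (auto simp: cube_eq)
  then obtain K where K: "\<And>p. p \<in> {0..T} \<times> cube X \<Longrightarrow> \<bar>utt (fst p) (snd p)\<bar> \<le> K"
  proof -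
    obtain B where "\<forall>y\<in>(\<lambda>p. utt (fst p) (snd p)) ` ({0..T} \<times> cube X). norm y \<le> B"
      using compact_imp_bounded[OF \<open>compact _\<close>] by (auto simp: bounded_iff)
    then show ?thesis using that[of B] by force
  qed
  define C' where "C' = \<bar>C\<bar>"
  define A where "A = sqrt ((2*X)^CARD('d) * (2*T)) * T * (C' + K)"
  have K0: "K \<ge> 0"
  proof -
    have "(0::real, vec 0 :: real ^ 'd) \<in> {0..T} \<times> cube X" using T_pos X_pos by (auto simp: cube_def)
    from K[OF this] show ?thesis by simp
  qed
  have A0: "A \<ge> 0" unfolding A_def C'_def using K0 T_pos X_pos by simp
  define \<delta> where "\<delta> = min \<delta>0 (\<epsilon> / (A + 1))"
  have "\<delta> > 0" using d0 eps A0 by (simp add: \<delta>_def)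
  moreover have "err_u_L2 T X N M u (Uhat N M) < \<epsilon>"
    if N1: "N \<ge> 1" and M2: "M \<ge> 2" and hd: "dt T N < \<delta>" and xd: "dx X M < \<delta>" for N M
  proof -
    define h where "h = dt T N"
    have h0: "h > 0" using N1 T_pos by (simp add: h_def dt_def)
    have Nh: "real N * h = T" using N1 by (simp add: h_def dt_def)
    define G where "G = (grid_idx M :: ('d \<Rightarrow> nat) set)"
    define e where "e n j = Uhat N M n j - u (real n * h) (gpt X M j)" for n j
    have Cb': "err_ut_inf T X N M ut (Uhat N M) \<le> C' * h"
    proof -
      have "err_ut_inf T X N M ut (Uhat N M) \<le> C * h" using Cb[OF N1 M2] hd xd by (simp add: h_def \<delta>_def)
      also have "\<dots> \<le> C' * h" using h0 by (simp add: C'_def mult_right_mono)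
      finally show ?thesis .
    qed
    have step: "\<bar>e (Suc n) j - e n j\<bar> \<le> (C' + K) * h\<^sup>2" if n: "n < N" and j: "j \<in> G" for n j
    proof -
      let ?S = "{\<bar>Dt_hat T N (Uhat N M) n j - ut (real n * dt T N) (gpt X M j)\<bar> | n j. n < N \<and> j \<in> grid_idx M}"
      have fin: "finite ?S"
        by (rule finite_image_set2) (use grid_fin in \<open>auto simp: Collect_mem_eq\<close>)
      have "\<bar>Dt_hat T N (Uhat N M) n j - ut (real n * h) (gpt X M j)\<bar> \<le> err_ut_inf T X N M ut (Uhat N M)"
        unfolding err_ut_inf_def h_def using n j G_def by (intro Max_ge[OF fin]) blast
      with Cb' have D: "\<bar>Dt_hat T N (Uhat N M) n j - ut (real n * h) (gpt X M j)\<bar> \<le> C' * h" by linarith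
      have U: "Uhat N M (Suc n) j - Uhat N M n j = h * Dt_hat T N (Uhat N M) n j"
        using h0 by (simp add: Dt_hat_def h_def)
      have cube: "gpt X M j \<in> cube X" using gpt_cube[OF M2 X_pos] j G_def by simp
      have "real n * h + h \<le> T" using n h0 Nh
      proof -
        have "real (Suc n) \<le> real N" using n by simp
        hence "real (Suc n) * h \<le> real N * h" using h0 by (intro mult_right_mono) auto
        thus ?thesis using Nh by (simp add: algebra_simps)
      qed
      hence tay: "\<bar>u (real n * h + h) (gpt X M j) - u (real n * h) (gpt X M j) - h * ut (real n * h) (gpt X M j)\<bar> \<le> K * h\<^sup>2"
        using h0 cube by (intro taylor1[where T=T and utt="\<lambda>s. utt s (gpt X M j)"] u_t u_tt) (use K in force)+
      have eq: "e (Suc n) j - e n j = h * (Dt_hat T N (Uhat N M) n j - ut (real n * h) (gpt X M j))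
          - (u (real n * h + h) (gpt X M j) - u (real n * h) (gpt X M j) - h * ut (real n * h) (gpt X M j))"
        unfolding e_def using U by (simp add: algebra_simps)
      have "\<bar>h * (Dt_hat T N (Uhat N M) n j - ut (real n * h) (gpt X M j))\<bar> \<le> h * (C' * h)"
        using D h0 by (simp add: abs_mult mult_left_mono)
      with tay show ?thesis unfolding eq by (simp add: power2_eq_square algebra_simps)
    qed
    have bnd: "n \<le> N \<Longrightarrow> \<bar>e n j\<bar> \<le> real n * ((C' + K) * h\<^sup>2)" if j: "j \<in> G" for n j
    proof (induction n)
      case 0 then show ?case using init j by (simp add: e_def G_def)
    next
      case (Suc n)
      then have "\<bar>e n j\<bar> \<le> real n * ((C' + K) * h\<^sup>2)" by simp
      moreover have "\<bar>e (Suc n) j - e n j\<bar> \<le> (C' + K) * h\<^sup>2" using step Suc.prems j by simp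
      ultimately show ?case by (simp add: algebra_simps)
    qed
    define E where "E = T * (C' + K) * h"
    have bndE: "(e n j)\<^sup>2 \<le> E\<^sup>2" if "n \<le> N" "j \<in> G" for n j
    proof -
      have "\<bar>e n j\<bar> \<le> real n * ((C' + K) * h\<^sup>2)" using bnd that by blast
      also have "\<dots> \<le> real N * ((C' + K) * h\<^sup>2)"
        using that K0 h0 by (intro mult_right_mono) (auto simp: C'_def)
      also have "\<dots> = E" using Nh by (simp add: E_def power2_eq_square)
      finally show ?thesis by (metis abs_ge_zero abs_le_square_iff abs_of_nonneg order_trans power2_abs)
    qed
    define S where "S = (\<Sum>n\<le>N. \<Sum>j\<in>G. (e n j)\<^sup>2)"
    have S0: "S \<ge> 0" unfolding S_def by (intro sum_nonneg) auto
    have SB: "S \<le> real (N + 1) * (real M ^ CARD('d) * E\<^sup>2)"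
    proof -
      have "S \<le> real (card {..N}) * (real (card G) * E\<^sup>2)"
        unfolding S_def
      proof (rule sum_bounded_above)
        fix n assume "n \<in> {..N}"
        then show "(\<Sum>j\<in>G. (e n j)\<^sup>2) \<le> real (card G) * E\<^sup>2"
          using bndE by (intro sum_bounded_above) auto
      qed
      then show ?thesis by (simp add: G_def grid_card)
    qed
    have dxpos: "dx X M > 0" using M2 X_pos by (simp add: dx_def)
    have dxM: "dx X M * real M \<le> 2 * X"
    proof -
      have "real M \<le> 2 * (real M - 1)" using M2 by simp
      hence "X * real M \<le> X * (2 * (real M - 1))" using X_pos
        by (intro mult_left_mono) auto
      thus ?thesis using M2 by (simp add: dx_def field_simps)
    qed
    have hN: "h * real (N + 1) \<le> 2 * T" using Nh N1 h0
    proof -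
      have "h \<le> real N * h" using N1 h0 by (simp add: mult_le_cancel_right2)
      thus ?thesis using Nh by (simp add: algebra_simps)
    qed
    have "dx X M ^ CARD('d) * h * S \<le> dx X M ^ CARD('d) * h * (real (N + 1) * (real M ^ CARD('d) * E\<^sup>2))"
      using SB dxpos h0 by (intro mult_left_mono) auto
    also have "\<dots> = (dx X M * real M) ^ CARD('d) * (h * real (N + 1)) * E\<^sup>2"
      by (simp add: power_mult_distrib mult_ac)
    also have "\<dots> \<le> (2 * X) ^ CARD('d) * (2 * T) * E\<^sup>2"
    proof (rule mult_right_mono[OF mult_mono])
      show "(dx X M * real M) ^ CARD('d) \<le> (2 * X) ^ CARD('d)"
        by (rule power_mono[OF dxM]) (use dxpos in simp)
    qed (use hN h0 X_pos in auto)
    also have "\<dots> = (A * h)\<^sup>2"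
    proof -
      have P: "(sqrt ((2*X)^CARD('d) * (2*T)))\<^sup>2 = (2*X)^CARD('d) * (2*T)"
        using X_pos T_pos by (intro real_sqrt_pow2) simp
      show ?thesis unfolding A_def E_def using P by (simp add: power_mult_distrib mult_ac)
    qed
    finally have sq: "dx X M ^ CARD('d) * h * S \<le> (A * h)\<^sup>2" .
    have "err_u_L2 T X N M u (Uhat N M) = sqrt (dx X M ^ CARD('d) * h * S)"
      unfolding err_u_L2_def S_def e_def G_def h_def by (simp add: real_sqrt_mult)
    also have "\<dots> \<le> A * h" using sq A0 h0 by (simp add: real_le_lsqrt)
    also have "\<dots> < \<epsilon>"
    proof -
      have "h < \<epsilon> / (A + 1)" using hd by (simp add: h_def \<delta>_def)
      hence "h * (A + 1) < \<epsilon>" using A0 by (simp add: field_simps)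
      thus ?thesis using h0 by (simp add: algebra_simps)
    qed
    finally show ?thesis .
  qed
  ultimately show "\<exists>\<delta>>0. \<forall>N M. N \<ge> 1 \<longrightarrow> M \<ge> 2 \<longrightarrow> dt T N < \<delta> \<longrightarrow> dx X M < \<delta> \<longrightarrow>
           err_u_L2 T X N M u (Uhat N M) < \<epsilon>" by blast
qed

end
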